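(* Let $\mathcal{H}$ be a Hilbert space of dimension $d\ge 3$ with a fixed orthonormal basis, and for an operator $U$ let $U^*$ denote its entrywise complex conjugate in that basis. Then there is no triple $(\epsilon,\mathcal{E},\mathcal{D})$ consisting of a number $\epsilon>0$, a finite-dimensional ancillary Hilbert space $\mathcal{H}_A$, and completely positive trace non-increasing maps $\mathcal{E}:\mathcal{B}(\mathcal{H})\to\mathcal{B}(\mathcal{H}\otimes\mathcal{H}_A)$ and $\mathcal{D}:\mathcal{B}(\mathcal{H}\otimes\mathcal{H}_A)\to\mathcal{B}(\mathcal{H})$ such that for every unitary $U$ on $\mathcal{H}$ and every density operator $\rho$ on $\mathcal{H}$, $$0<\epsilon\le\operatorname{tr}\big[\mathcal{D}\circ(\mathcal{U}_U\otimes\mathrm{id}_{\mathcal{H}_A})\circ\mathcal{E}(\rho)\big]\quad\text{and}\quad \mathcal{D}\circ(\mathcal{U}_U\otimes\mathrm{id}_{\mathcal{H}_A})\circ\mathcal{E}(\rho)\propto U^*\rho\,U^{*\dagger},$$ where $\mathcal{U}_U(X)=UXU^\dagger$ acts on the $\mathcal{H}$ factor. *)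

theory Defs
  imports Complex_Main "Jordan_Normal_Form.Matrix"
begin

text \<open>Operators on C^n are complex n x n matrices (fixed orthonormal = standard basis).\<close>

definition mtrace :: "complex mat \<Rightarrow> complex" where
  "mtrace A = (\<Sum>i<dim_row A. A $$ (i, i))"

definition adj :: "complex mat \<Rightarrow> complex mat" where
  "adj A = transpose_mat (map_mat cnj A)"

definition entry_conj :: "complex mat \<Rightarrow> complex mat" where
  "entry_conj A = map_mat cnj A"

definition unitary_op :: "nat \<Rightarrow> complex mat \<Rightarrow> bool" where
  "unitary_op n U \<longleftrightarrow> U \<in> carrier_mat n n \<and> adj U * U = 1\<^sub>m n"

definition psd :: "nat \<Rightarrow> complex mat \<Rightarrow> bool" where
  "psd n A \<longleftrightarrow> A \<in> carrier_mat n n \<and>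
     (\<forall>v \<in> carrier_vec n. Im (map_vec cnj v \<bullet> (A *\<^sub>v v)) = 0 \<and> Re (map_vec cnj v \<bullet> (A *\<^sub>v v)) \<ge> 0)"

definition density_op :: "nat \<Rightarrow> complex mat \<Rightarrow> bool" where
  "density_op n \<rho> \<longleftrightarrow> psd n \<rho> \<and> mtrace \<rho> = 1"

definition lin_map :: "nat \<Rightarrow> nat \<Rightarrow> (complex mat \<Rightarrow> complex mat) \<Rightarrow> bool" where
  "lin_map n m E \<longleftrightarrow>
     (\<forall>A \<in> carrier_mat n n. E A \<in> carrier_mat m m) \<and>
     (\<forall>A \<in> carrier_mat n n. \<forall>B \<in> carrier_mat n n. E (A + B) = E A + E B) \<and>
     (\<forall>A \<in> carrier_mat n n. \<forall>c. E (c \<cdot>\<^sub>m A) = c \<cdot>\<^sub>m E A)"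

text \<open>id_k \<otimes> E acting on B(C^k \<otimes> C^n), with the C^k index as the outer (block) index.\<close>
definition ampl :: "nat \<Rightarrow> nat \<Rightarrow> nat \<Rightarrow> (complex mat \<Rightarrow> complex mat) \<Rightarrow> complex mat \<Rightarrow> complex mat" where
  "ampl k n m E X = mat (k * m) (k * m) (\<lambda>(r, s).
      E (mat n n (\<lambda>(i, j). X $$ ((r div m) * n + i, (s div m) * n + j))) $$ (r mod m, s mod m))"

definition completely_positive :: "nat \<Rightarrow> nat \<Rightarrow> (complex mat \<Rightarrow> complex mat) \<Rightarrow> bool" where
  "completely_positive n m E \<longleftrightarrow>
     (\<forall>k X. psd (k * n) X \<longrightarrow> psd (k * m) (ampl k n m E X))"

definition trace_nonincreasing :: "nat \<Rightarrow> (complex mat \<Rightarrow> complex mat) \<Rightarrow> bool" where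
  "trace_nonincreasing n E \<longleftrightarrow> (\<forall>\<rho>. psd n \<rho> \<longrightarrow> Re (mtrace (E \<rho>)) \<le> Re (mtrace \<rho>))"

definition cp_tni :: "nat \<Rightarrow> nat \<Rightarrow> (complex mat \<Rightarrow> complex mat) \<Rightarrow> bool" where
  "cp_tni n m E \<longleftrightarrow> lin_map n m E \<and> completely_positive n m E \<and> trace_nonincreasing n E"

text \<open>Kronecker product A \<otimes> B (A p x p, B q x q); index (i,k) of C^p \<otimes> C^q is i*q+k.\<close>
definition kron :: "complex mat \<Rightarrow> complex mat \<Rightarrow> complex mat" where
  "kron A B = mat (dim_row A * dim_row B) (dim_col A * dim_col B)
     (\<lambda>(r, s). A $$ (r div dim_row B, s div dim_col B) * B $$ (r mod dim_row B, s mod dim_col B))"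

definition unitary_chan_on_first :: "nat \<Rightarrow> complex mat \<Rightarrow> complex mat \<Rightarrow> complex mat" where
  "unitary_chan_on_first a U X = kron U (1\<^sub>m a) * X * adj (kron U (1\<^sub>m a))"

end

theory Submission
  imports Defs
begin


definition Bf :: "nat \<Rightarrow> complex mat \<Rightarrow> (nat \<Rightarrow> complex) \<Rightarrow> (nat \<Rightarrow> complex) \<Rightarrow> complex" where
  "Bf N P v w = (\<Sum>i<N. \<Sum>j<N. cnj (v i) * P$$(i,j) * w j)"

lemma psd_Bf:
  assumes "psd N P"
  shows "Im (Bf N P v v) = 0 \<and> Re (Bf N P v v) \<ge> 0"
proof -
  have P: "P \<in> carrier_mat N N" using assms unfolding psd_def by auto
  have "map_vec cnj (vec N v) \<bullet> (P *\<^sub>v vec N v) = Bf N P v v"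
    using P unfolding Bf_def scalar_prod_def mult_mat_vec_def row_def
    by (auto simp: atLeast0LessThan sum_distrib_left mult.assoc intro!: sum.cong)
  then show ?thesis using assms unfolding psd_def by (metis vec_carrier)
qed

lemma Bf_right_add: "Bf N P v (\<lambda>i. w i + u i) = Bf N P v w + Bf N P v u"
  unfolding Bf_def by (simp add: distrib_left sum.distrib)
lemma Bf_right_scale: "Bf N P v (\<lambda>i. c * w i) = c * Bf N P v w"
  unfolding Bf_def by (simp add: sum_distrib_left mult_ac)
lemma Bf_right_sum: "Bf N P v (\<lambda>i. \<Sum>m\<in>S. F m i) = (\<Sum>m\<in>S. Bf N P v (F m))"
  unfolding Bf_def by (simp add: sum_distrib_left sum.swap[of _ S])
lemma Bf_right_diff: "Bf N P v (\<lambda>i. w i - u i) = Bf N P v w - Bf N P v u"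
  unfolding Bf_def by (simp add: right_diff_distrib sum_subtractf)
lemma Bf_left_add: "Bf N P (\<lambda>i. w i + u i) v = Bf N P w v + Bf N P u v"
  unfolding Bf_def by (simp add: distrib_right sum.distrib)
lemma Bf_left_diff: "Bf N P (\<lambda>i. w i - u i) v = Bf N P w v - Bf N P u v"
  unfolding Bf_def by (simp add: left_diff_distrib sum_subtractf)
lemma Bf_left_scale: "Bf N P (\<lambda>i. c * w i) v = cnj c * Bf N P w v"
  unfolding Bf_def by (simp add: sum_distrib_left mult_ac)

lemma real_quad_zero:
  fixes s q :: real
  assumes "q \<ge> 0" and "\<And>t. t * s + t^2 * q \<ge> 0"
  shows "s = 0"
proof -
  define r where "r = 1 / (q + 1)"
  have r0: "r > 0" unfolding r_def using assms(1) by simp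
  have rq: "r * q = 1 - r" unfolding r_def using assms(1) by (simp add: field_simps)
  have "(- s * r) * s + (- s * r)^2 * q = - (s^2 * r^2)"
  proof -
    have "(- s * r) * s + (- s * r)^2 * q = s^2 * r * (r * q - 1)" by (simp add: power2_eq_square algebra_simps)
    also have "\<dots> = s^2 * r * (- r)" by (simp only: rq) simp
    also have "\<dots> = - (s^2 * r^2)" by (simp add: power2_eq_square)
    finally show ?thesis .
  qed
  with assms(2)[of "- s * r"] have "s^2 * r^2 \<le> 0" by simp
  with r0 have "s^2 \<le> 0" by (simp add: mult_le_0_iff)
  then show ?thesis by simp
qed

lemma Bf_null:
  assumes "psd N P" and "Bf N P v v = 0"
  shows "Bf N P w v = 0"
proof -
  have S0: "Bf N P v u + Bf N P u v = 0" for u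
  proof -
    have exp: "Bf N P (\<lambda>i. v i + complex_of_real t * u i) (\<lambda>i. v i + complex_of_real t * u i)
        = complex_of_real t * (Bf N P v u + Bf N P u v) + complex_of_real (t^2) * Bf N P u u" for t
      by (simp add: Bf_left_add Bf_right_add Bf_left_scale Bf_right_scale assms(2) algebra_simps power2_eq_square)
    have Q: "Im (Bf N P u u) = 0" "Re (Bf N P u u) \<ge> 0" using psd_Bf[OF assms(1)] by auto
    have ImS: "Im (Bf N P v u + Bf N P u v) = 0"
      using psd_Bf[OF assms(1), of "\<lambda>i. v i + complex_of_real 1 * u i"] exp[of 1] Q by simp
    have "t * Re (Bf N P v u + Bf N P u v) + t^2 * Re (Bf N P u u) \<ge> 0" for t
      using psd_Bf[OF assms(1), of "\<lambda>i. v i + complex_of_real t * u i"] exp[of t] by simp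
    then have "Re (Bf N P v u + Bf N P u v) = 0" using real_quad_zero Q by blast
    with ImS show ?thesis by (simp add: complex_eq_iff)
  qed
  have 1: "Bf N P v w + Bf N P w v = 0" by (rule S0)
  have 2: "Bf N P v (\<lambda>i. \<i> * w i) + Bf N P (\<lambda>i. \<i> * w i) v = 0" by (rule S0)
  then have "\<i> * Bf N P v w - \<i> * Bf N P w v = 0" by (simp add: Bf_left_scale Bf_right_scale)
  then have "Bf N P v w = Bf N P w v" by (simp add: right_diff_distrib[symmetric])
  with 1 show ?thesis by simp
qed



lemma adj_carrier: "M \<in> carrier_mat m n \<Longrightarrow> adj M \<in> carrier_mat n m"
  unfolding adj_def by auto

lemma adj_index[simp]: "i < dim_col M \<Longrightarrow> j < dim_row M \<Longrightarrow> adj M $$ (i,j) = cnj (M $$ (j,i))"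
  unfolding adj_def by auto
lemma adj_dims[simp]: "dim_row (adj M) = dim_col M" "dim_col (adj M) = dim_row M"
  unfolding adj_def by auto

lemma cnj_scalar_mult:
  assumes M: "M \<in> carrier_mat m n" and v: "v \<in> carrier_vec m" and y: "y \<in> carrier_vec n"
  shows "map_vec cnj v \<bullet> (M *\<^sub>v y) = map_vec cnj (adj M *\<^sub>v v) \<bullet> y"
proof -
  have "map_vec cnj v \<bullet> (M *\<^sub>v y) = (\<Sum>i<m. cnj (v$i) * (\<Sum>j<n. M$$(i,j) * y$j))"
    using M v y unfolding scalar_prod_def mult_mat_vec_def row_def
    by (auto simp: atLeast0LessThan intro!: sum.cong)
  also have "\<dots> = (\<Sum>j<n. (\<Sum>i<m. cnj (v$i) * M$$(i,j)) * y$j)"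
    by (simp add: sum_distrib_left sum_distrib_right sum.swap[of _ "{..<m}"] mult_ac)
  also have "\<dots> = map_vec cnj (adj M *\<^sub>v v) \<bullet> y"
    using M v y unfolding scalar_prod_def mult_mat_vec_def row_def
    by (auto simp: atLeast0LessThan adj_index adj_carrier mult_ac intro!: sum.cong)
  finally show ?thesis .
qed

lemma psd_congr:
  assumes A: "psd n A" and M: "M \<in> carrier_mat m n"
  shows "psd m (M * A * adj M)"
proof -
  have Ac: "A \<in> carrier_mat n n" using A unfolding psd_def by auto
  have aM: "adj M \<in> carrier_mat n m" using adj_carrier[OF M] .
  have C: "M * A * adj M \<in> carrier_mat m m" using Ac M aM by auto
  have "\<forall>v\<in>carrier_vec m. Im (map_vec cnj v \<bullet> (M * A * adj M *\<^sub>v v)) = 0 \<and> 0 \<le> Re (map_vec cnj v \<bullet> (M * A * adj M *\<^sub>v v))"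
  proof
    fix v :: "complex vec" assume v: "v \<in> carrier_vec m"
    define u where "u = adj M *\<^sub>v v"
    have u: "u \<in> carrier_vec n" unfolding u_def using aM v by auto
    have MA: "M * A \<in> carrier_mat m n" using M Ac by auto
    have "M * A * adj M *\<^sub>v v = (M * A) *\<^sub>v u"
      unfolding u_def by (rule assoc_mult_mat_vec[OF MA aM v])
    also have "\<dots> = M *\<^sub>v (A *\<^sub>v u)" by (rule assoc_mult_mat_vec[OF M Ac u])
    finally have "M * A * adj M *\<^sub>v v = M *\<^sub>v (A *\<^sub>v u)" .
    then have "map_vec cnj v \<bullet> (M * A * adj M *\<^sub>v v) = map_vec cnj u \<bullet> (A *\<^sub>v u)"
      using cnj_scalar_mult[OF M v, of "A *\<^sub>v u"] Ac u unfolding u_def by auto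
    then show "Im (map_vec cnj v \<bullet> (M * A * adj M *\<^sub>v v)) = 0 \<and> 0 \<le> Re (map_vec cnj v \<bullet> (M * A * adj M *\<^sub>v v))"
      using A u unfolding psd_def by auto
  qed
  then show ?thesis using C unfolding psd_def by auto
qed

lemma lin_zero:
  assumes "lin_map n m D"
  shows "D (0\<^sub>m n n) = 0\<^sub>m m m"
proof -
  have c: "D (0\<^sub>m n n) \<in> carrier_mat m m" using assms unfolding lin_map_def by auto
  have z: "0\<^sub>m n n + 0\<^sub>m n n = (0\<^sub>m n n :: complex mat)" by (rule left_add_zero_mat) simp
  have add: "\<forall>A\<in>carrier_mat n n. \<forall>B\<in>carrier_mat n n. D (A + B) = D A + D B" using assms unfolding lin_map_def by auto
  have "D (0\<^sub>m n n + 0\<^sub>m n n) = D (0\<^sub>m n n) + D (0\<^sub>m n n)" using add by (meson zero_carrier_mat)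
  then have h: "D (0\<^sub>m n n) = D (0\<^sub>m n n) + D (0\<^sub>m n n)" by (simp only: z)
  have e: "D (0\<^sub>m n n) $$ (i,j) = 0" if ij: "i < m" "j < m" for i j
  proof -
    have "D (0\<^sub>m n n) $$ (i,j) = (D (0\<^sub>m n n) + D (0\<^sub>m n n)) $$ (i,j)" using h by simp
    also have "\<dots> = D (0\<^sub>m n n) $$ (i,j) + D (0\<^sub>m n n) $$ (i,j)" using c ij by auto
    finally show ?thesis by simp
  qed
  show ?thesis by (rule eq_matI) (use c e in auto)
qed

lemma lin_sum:
  assumes L: "lin_map n m D" and fin: "finite S" and A: "\<forall>j\<in>S. A j \<in> carrier_mat n n"
    and x: "x < m" and y: "y < m"
  shows "D (mat n n (\<lambda>rs. \<Sum>j\<in>S. c j * A j $$ rs)) $$ (x,y) = (\<Sum>j\<in>S. c j * D (A j) $$ (x,y))"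
  using fin A
proof (induction S rule: finite_induct)
  case empty
  have "mat n n (\<lambda>a. 0) = (0\<^sub>m n n :: complex mat)" by (auto intro!: eq_matI)
  then show ?case using lin_zero[OF L] x y by simp
next
  case (insert j S)
  let ?M = "mat n n (\<lambda>rs. \<Sum>j\<in>S. c j * A j $$ rs)"
  have Aj: "A j \<in> carrier_mat n n" using insert by auto
  have eq: "mat n n (\<lambda>rs. \<Sum>j\<in>insert j S. c j * A j $$ rs) = c j \<cdot>\<^sub>m A j + ?M"
    using insert Aj by (auto intro!: eq_matI)
  have Mc: "?M \<in> carrier_mat n n" by auto
  have "D (c j \<cdot>\<^sub>m A j + ?M) = D (c j \<cdot>\<^sub>m A j) + D ?M" using L Aj Mc unfolding lin_map_def by auto
  also have "\<dots> = c j \<cdot>\<^sub>m D (A j) + D ?M" using L Aj unfolding lin_map_def by auto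
  moreover have DA: "D (A j) \<in> carrier_mat m m" "D ?M \<in> carrier_mat m m" using L Aj Mc unfolding lin_map_def by auto
  ultimately have "D (c j \<cdot>\<^sub>m A j + ?M) $$ (x,y) = c j * D (A j) $$ (x,y) + D ?M $$ (x,y)"
    using x y by simp
  moreover have "D ?M $$ (x,y) = (\<Sum>j\<in>S. c j * D (A j) $$ (x,y))" using insert by auto
  ultimately show ?case using eq insert x y by simp
qed

lemma cp_psd:
  assumes "cp_tni n m E" and "psd n \<rho>"
  shows "psd m (E \<rho>)"
proof -
  have Ec: "E \<rho> \<in> carrier_mat m m" and rc: "\<rho> \<in> carrier_mat n n"
    using assms unfolding cp_tni_def lin_map_def psd_def by auto
  have "\<forall>k X. psd (k*n) X \<longrightarrow> psd (k*m) (ampl k n m E X)" using assms unfolding cp_tni_def completely_positive_def by auto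
  then have "psd (1*n) \<rho> \<longrightarrow> psd (1*m) (ampl 1 n m E \<rho>)" by blast
  then have "psd m (ampl 1 n m E \<rho>)" using assms(2) by simp
  moreover have "mat n n (\<lambda>(i,j). \<rho> $$ (i,j)) = \<rho>" using rc by (auto intro!: eq_matI)
  then have "ampl 1 n m E \<rho> = E \<rho>" unfolding ampl_def using Ec by (auto intro!: eq_matI)
  ultimately show ?thesis by simp
qed



definition xv :: "nat \<Rightarrow> nat \<Rightarrow> (nat \<Rightarrow> complex) \<Rightarrow> nat \<Rightarrow> complex" where
  "xv d a z i = (if i mod d = a then cnj (z (i div d)) else 0)"

definition Nv :: "nat \<Rightarrow> nat \<Rightarrow> nat \<Rightarrow> (nat \<Rightarrow> complex) \<Rightarrow> nat \<Rightarrow> complex" where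
  "Nv d a b z i = cnj (z a) * xv d a z i - cnj (z b) * xv d b z i"

definition f1 :: "complex \<Rightarrow> nat \<Rightarrow> complex" where "f1 t k = (if k = 0 then t else 1)"
definition f2 :: "complex \<Rightarrow> nat \<Rightarrow> complex" where "f2 t k = (if k = 1 then t else 1)"
definition f3 :: "complex \<Rightarrow> nat \<Rightarrow> complex" where "f3 t k = (if k = 0 \<or> k = 1 then t else 1)"

lemma unit_cnj: "cmod w = 1 \<Longrightarrow> w * cnj w = 1"
  by (metis complex_norm_square of_real_1 power_one)

lemma comb_identity:
  assumes d: "d \<ge> 3"
  shows "xv d 0 (\<lambda>_. 1) i = 1/4 * (\<Sum>m<4.
     (\<i>^m)^2 * Nv d 0 1 (f1 (\<i>^m)) i + \<i>^m * Nv d 0 1 (f1 (\<i>^m)) i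
     + (\<i>^m)^2 * Nv d 1 2 (f3 (\<i>^m)) i - (\<i>^m)^2 * Nv d 1 0 (f2 (\<i>^m)) i)"
proof -
  have d0: "d > 2" using d by simp
  have c: "i mod d = 0 \<or> i mod d = 1 \<or> i mod d = 2 \<or> i mod d > 2" by auto
  have k: "i div d = 0 \<or> i div d = 1 \<or> i div d = 2 \<or> i div d > 2" by auto
  show ?thesis using c k d0
    unfolding xv_def Nv_def f1_def f2_def f3_def
    by (auto simp: numeral_eq_Suc power2_eq_square)
qed

lemma null_Nv:
  assumes P: "psd N P" and a: "a < d" and b: "b < d" and u: "\<forall>k. z k * cnj (z k) = 1"
    and B: "\<forall>a<d. \<forall>b<d. Bf N P (xv d a z) (xv d b z) = c * cnj (z a) * z b / of_nat d"
  shows "Bf N P w (Nv d a b z) = 0"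
proof -
  have ua: "z a * cnj (z a) = 1" and ub: "z b * cnj (z b) = 1" using u by auto
  have "Bf N P (Nv d a b z) (Nv d a b z) =
      z a * cnj (z a) * Bf N P (xv d a z) (xv d a z) - z a * cnj (z b) * Bf N P (xv d a z) (xv d b z)
      - z b * cnj (z a) * Bf N P (xv d b z) (xv d a z) + z b * cnj (z b) * Bf N P (xv d b z) (xv d b z)"
    unfolding Nv_def by (simp add: Bf_left_diff Bf_right_diff Bf_left_scale Bf_right_scale algebra_simps)
  also have "\<dots> = (z a * cnj (z a)) * (z a * cnj (z a)) * c / of_nat d
      - (z a * cnj (z a)) * (z b * cnj (z b)) * c / of_nat d
      - (z a * cnj (z a)) * (z b * cnj (z b)) * c / of_nat d
      + (z b * cnj (z b)) * (z b * cnj (z b)) * c / of_nat d"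
  proof -
    have e: "Bf N P (xv d a z) (xv d a z) = c * cnj (z a) * z a / of_nat d"
      "Bf N P (xv d a z) (xv d b z) = c * cnj (z a) * z b / of_nat d"
      "Bf N P (xv d b z) (xv d a z) = c * cnj (z b) * z a / of_nat d"
      "Bf N P (xv d b z) (xv d b z) = c * cnj (z b) * z b / of_nat d" using B a b by auto
    show ?thesis unfolding e by (simp add: field_simps)
  qed
  also have "\<dots> = 0" using ua ub by simp
  finally show ?thesis using Bf_null[OF P] by blast
qed

lemma unit_i_pow: "(\<i>^m) * cnj (\<i>^m) = 1"
  by (rule unit_cnj) (simp add: norm_power)

lemma unit_f: "cmod t = 1 \<Longrightarrow> \<forall>k. f1 t k * cnj (f1 t k) = 1"
  "cmod t = 1 \<Longrightarrow> \<forall>k. f2 t k * cnj (f2 t k) = 1"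
  "cmod t = 1 \<Longrightarrow> \<forall>k. f3 t k * cnj (f3 t k) = 1"
  unfolding f1_def f2_def f3_def using unit_cnj by auto

lemma final_contra:
  assumes P: "psd N P" and d: "d \<ge> 3" and eps: "\<epsilon> > 0"
    and key: "\<And>z. \<forall>k. z k * cnj (z k) = 1 \<Longrightarrow>
       \<exists>c. \<epsilon> \<le> Re c \<and> (\<forall>a<d. \<forall>b<d. Bf N P (xv d a z) (xv d b z) = c * cnj (z a) * z b / of_nat d)"
  shows False
proof -
  have nul: "Bf N P w (Nv d a b z) = 0" if h: "a < d" "b < d" "\<forall>k. z k * cnj (z k) = 1" for w a b z
  proof -
    obtain c where "\<forall>a<d. \<forall>b<d. Bf N P (xv d a z) (xv d b z) = c * cnj (z a) * z b / of_nat d"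
      using key[OF h(3)] by blast
    then show ?thesis using null_Nv[OF P h(1,2,3)] by blast
  qed
  have cm: "cmod (\<i>^m) = 1" for m by (simp add: norm_power)
  have d012: "0 < d" "1 < d" "2 < d" using d by auto
  let ?T = "xv d 0 (\<lambda>_. 1)"
  have T: "?T = (\<lambda>i. 1/4 * (\<Sum>m<4.
     (\<i>^m)^2 * Nv d 0 1 (f1 (\<i>^m)) i + \<i>^m * Nv d 0 1 (f1 (\<i>^m)) i
     + (\<i>^m)^2 * Nv d 1 2 (f3 (\<i>^m)) i - (\<i>^m)^2 * Nv d 1 0 (f2 (\<i>^m)) i))"
    using comb_identity[OF d] by blast
  have "Bf N P ?T ?T = 0"
    apply (subst (2) T)
    apply (simp only: Bf_right_scale Bf_right_sum Bf_right_add Bf_right_diff)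
    using nul[OF d012(1) d012(2) unit_f(1)[OF cm]] nul[OF d012(2) d012(3) unit_f(3)[OF cm]]
      nul[OF d012(2) d012(1) unit_f(2)[OF cm]]
    by (simp add: Bf_right_scale Bf_right_sum Bf_right_add Bf_right_diff)
  moreover obtain c where c: "\<epsilon> \<le> Re c" "\<forall>a<d. \<forall>b<d. Bf N P (xv d a (\<lambda>_. 1)) (xv d b (\<lambda>_. 1)) = c * cnj ((\<lambda>_. 1::complex) a) * (\<lambda>_. 1::complex) b / of_nat d"
    using key[of "\<lambda>_. 1"] by auto
  ultimately have "c / of_nat d = 0" using d012 by auto
  then have "c = 0" using d012 by simp
  then show False using c eps by simp
qed



definition DiagM :: "nat \<Rightarrow> (nat \<Rightarrow> complex) \<Rightarrow> complex mat" where
  "DiagM n f = mat n n (\<lambda>(i,j). if i = j then f i else 0)"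

lemma DiagM_carrier[simp]: "DiagM n f \<in> carrier_mat n n"
  unfolding DiagM_def by auto
lemma DiagM_dims[simp]: "dim_row (DiagM n f) = n" "dim_col (DiagM n f) = n"
  unfolding DiagM_def by auto

lemma sum_delta_l: "i < (n::nat) \<Longrightarrow> (\<Sum>r\<in>{0..<n}. (if i = r then c else 0) * (g r::complex)) = c * g i"
proof -
  assume i: "i < n"
  have "(\<Sum>r\<in>{0..<n}. (if i = r then c else 0) * g r) = (\<Sum>r\<in>{0..<n}. if r = i then c * g r else 0)"
    by (intro sum.cong) auto
  also have "\<dots> = c * g i" using i by (simp add: sum.delta')
  finally show ?thesis .
qed
lemma sum_delta_r: "j < (n::nat) \<Longrightarrow> (\<Sum>r\<in>{0..<n}. (g r::complex) * (if r = j then c r else 0)) = g j * c j"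
proof -
  assume i: "j < n"
  have "(\<Sum>r\<in>{0..<n}. g r * (if r = j then c r else 0)) = (\<Sum>r\<in>{0..<n}. if r = j then g r * c r else 0)"
    by (intro sum.cong) auto
  also have "\<dots> = g j * c j" using i by (simp add: sum.delta)
  finally show ?thesis .
qed

lemma DiagM_mult_left:
  assumes "A \<in> carrier_mat n m"
  shows "DiagM n f * A = mat n m (\<lambda>(i,j). f i * A $$ (i,j))"
proof (rule eq_matI)
  fix i j assume ij: "i < dim_row (mat n m (\<lambda>(i,j). f i * A $$ (i,j)))" "j < dim_col (mat n m (\<lambda>(i,j). f i * A $$ (i,j)))"
  then have "(DiagM n f * A) $$ (i,j) = (\<Sum>r\<in>{0..<n}. (if i = r then f i else 0) * A $$ (r,j))"
    using assms unfolding DiagM_def by (auto simp: scalar_prod_def intro!: sum.cong)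
  also have "\<dots> = f i * A $$ (i,j)" using ij sum_delta_l[of i n "f i" "\<lambda>r. A $$ (r,j)"] by simp
  finally show "(DiagM n f * A) $$ (i,j) = mat n m (\<lambda>(i,j). f i * A $$ (i,j)) $$ (i,j)" using ij by simp
qed (use assms in auto)

lemma DiagM_mult_right:
  assumes "A \<in> carrier_mat m n"
  shows "A * DiagM n f = mat m n (\<lambda>(i,j). A $$ (i,j) * f j)"
proof (rule eq_matI)
  fix i j assume ij: "i < dim_row (mat m n (\<lambda>(i,j). A $$ (i,j) * f j))" "j < dim_col (mat m n (\<lambda>(i,j). A $$ (i,j) * f j))"
  then have "(A * DiagM n f) $$ (i,j) = (\<Sum>r\<in>{0..<n}. A $$ (i,r) * (if r = j then f r else 0))"
    using assms unfolding DiagM_def by (auto simp: scalar_prod_def intro!: sum.cong)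
  also have "\<dots> = A $$ (i,j) * f j" using ij sum_delta_r[of j n "\<lambda>r. A $$ (i,r)" f] by simp
  finally show "(A * DiagM n f) $$ (i,j) = mat m n (\<lambda>(i,j). A $$ (i,j) * f j) $$ (i,j)" using ij by simp
qed (use assms in auto)

lemma adj_DiagM: "adj (DiagM n f) = DiagM n (\<lambda>i. cnj (f i))"
  unfolding DiagM_def by (auto intro!: eq_matI)

lemma entry_conj_DiagM: "entry_conj (DiagM n f) = DiagM n (\<lambda>i. cnj (f i))"
  unfolding DiagM_def entry_conj_def by (auto intro!: eq_matI)

lemma DiagM_conj:
  assumes "A \<in> carrier_mat n n"
  shows "DiagM n f * A * adj (DiagM n f) = mat n n (\<lambda>(i,j). f i * A $$ (i,j) * cnj (f j))"
proof -
  have "DiagM n f * A = mat n n (\<lambda>(i,j). f i * A $$ (i,j))" using DiagM_mult_left[OF assms] .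
  moreover have "mat n n (\<lambda>(i,j). f i * A $$ (i,j)) * DiagM n (\<lambda>i. cnj (f i))
     = mat n n (\<lambda>(i,j). mat n n (\<lambda>(i,j). f i * A $$ (i,j)) $$ (i,j) * cnj (f j))"
    by (rule DiagM_mult_right) auto
  ultimately show ?thesis unfolding adj_DiagM by (auto intro!: eq_matI)
qed

lemma DiagM_unitary:
  assumes "\<forall>k. z k * cnj (z k) = 1"
  shows "unitary_op d (DiagM d z)"
proof -
  have "adj (DiagM d z) * DiagM d z = mat d d (\<lambda>(i,j). (if i = j then cnj (z i) else 0) * z j)"
    unfolding adj_DiagM by (subst DiagM_mult_right) (auto simp: DiagM_def intro!: eq_matI)
  also have "\<dots> = 1\<^sub>m d" using assms by (auto intro!: eq_matI simp: mult.commute)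
  finally show ?thesis unfolding unitary_op_def by simp
qed

lemma kron_DiagM:
  "kron (DiagM d z) (1\<^sub>m a) = DiagM (d*a) (\<lambda>r. z (r div a))"
proof (rule eq_matI)
  fix r s assume rs: "r < dim_row (DiagM (d*a) (\<lambda>r. z (r div a)))" "s < dim_col (DiagM (d*a) (\<lambda>r. z (r div a)))"
  then have r: "r < d*a" and s: "s < d*a" unfolding DiagM_def by auto
  then have a0: "a > 0" by (metis mult_0_right not_less_zero neq0_conv)
  have rd: "r div a < d" "s div a < d" using r s by (auto simp: less_mult_imp_div_less mult.commute)
  have eq: "(r div a = s div a \<and> r mod a = s mod a) \<longleftrightarrow> r = s"
    by (metis div_mult_mod_eq)
  show "kron (DiagM d z) (1\<^sub>m a) $$ (r,s) = DiagM (d*a) (\<lambda>r. z (r div a)) $$ (r,s)"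
    using r s rd a0 eq unfolding kron_def DiagM_def by auto
qed (auto simp: kron_def DiagM_def)

lemma reindex_mod:
  fixes d :: nat and g :: "nat \<Rightarrow> complex"
  assumes x0: "x0 < d"
  shows "(\<Sum>i<d*d. (if i mod d = x0 then g i else 0)) = (\<Sum>k<d. g (k*d+x0))"
proof -
  have "(\<Sum>i<d*d. (if i mod d = x0 then g i else 0)) = (\<Sum>i\<in>{i\<in>{..<d*d}. i mod d = x0}. g i)"
    by (subst sum.inter_filter) auto
  also have "{i\<in>{..<d*d}. i mod d = x0} = (\<lambda>k. k*d+x0) ` {..<d}"
  proof
    show "{i\<in>{..<d*d}. i mod d = x0} \<subseteq> (\<lambda>k. k*d+x0) ` {..<d}"
    proof
      fix i assume "i \<in> {i\<in>{..<d*d}. i mod d = x0}"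
      then have i: "i < d*d" "i mod d = x0" by auto
      then have "i = (i div d)*d + x0" by (metis div_mult_mod_eq)
      moreover have "i div d < d" using i(1) by (simp add: less_mult_imp_div_less)
      ultimately show "i \<in> (\<lambda>k. k*d+x0) ` {..<d}" by blast
    qed
  next
    show "(\<lambda>k. k*d+x0) ` {..<d} \<subseteq> {i\<in>{..<d*d}. i mod d = x0}"
    proof
      fix i assume "i \<in> (\<lambda>k. k*d+x0) ` {..<d}"
      then obtain k where k: "k < d" "i = k*d+x0" by auto
      have "k*d + x0 < (k+1)*d" using x0 by simp
      also have "\<dots> \<le> d*d" using k(1) by (metis Suc_eq_plus1 Suc_leI mult_le_mono1)
      finally show "i \<in> {i\<in>{..<d*d}. i mod d = x0}" using k x0 by auto
    qed
  qed
  also have "(\<Sum>i\<in>(\<lambda>k. k*d+x0) ` {..<d}. g i) = (\<Sum>k<d. g (k*d+x0))"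
    by (subst sum.reindex) (auto simp: inj_on_def)
  finally show ?thesis .
qed



lemma cnj_sq: "cnj S * S / of_nat d = complex_of_real ((cmod S)^2 / real d)"
  using complex_norm_square[of S] by (simp add: mult.commute)

lemma rho_density:
  assumes d: "d > 0"
  shows "density_op d (mat d d (\<lambda>_. 1 / of_nat d))"
proof -
  let ?r = "mat d d (\<lambda>_. 1 / of_nat d) :: complex mat"
  have q: "map_vec cnj v \<bullet> (?r *\<^sub>v v) = complex_of_real ((cmod (\<Sum>j<d. v$j))^2 / real d)"
    if v: "v \<in> carrier_vec d" for v
  proof -
    have "map_vec cnj v \<bullet> (?r *\<^sub>v v) = (\<Sum>i<d. cnj (v$i) * (\<Sum>j<d. 1 / of_nat d * v$j))"
      using v unfolding scalar_prod_def mult_mat_vec_def row_def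
      by (auto simp: atLeast0LessThan intro!: sum.cong)
    also have "\<dots> = cnj (\<Sum>j<d. v$j) * (\<Sum>j<d. v$j) / of_nat d"
      by (simp add: sum_distrib_left[symmetric] sum_distrib_right[symmetric] cnj_sum sum_divide_distrib[symmetric])
    also have "\<dots> = complex_of_real ((cmod (\<Sum>j<d. v$j))^2 / real d)"
      by (rule cnj_sq)
    finally show ?thesis .
  qed
  have "psd d ?r" unfolding psd_def using q by auto
  moreover have "mtrace ?r = 1" unfolding mtrace_def using d by simp
  ultimately show ?thesis unfolding density_op_def by simp
qed

lemma div_lt: "r < d * (a::nat) \<Longrightarrow> r div a < d"
  by (simp add: less_mult_imp_div_less mult.commute)

lemma lt_block: "k < d \<Longrightarrow> i < n \<Longrightarrow> k * n + i < d * (n::nat)"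
proof -
  assume k: "k < d" and i: "i < n"
  have "k * n + i < (k+1) * n" using i by simp
  also have "\<dots> \<le> d * n" using k by (metis Suc_eq_plus1 Suc_leI mult_le_mono1)
  finally show ?thesis .
qed

lemma construct:
  fixes d a :: nat and E D :: "complex mat \<Rightarrow> complex mat" and \<epsilon> :: real
  assumes d3: "d \<ge> 3" and cpE: "cp_tni d (d*a) E" and cpD: "cp_tni (d*a) d D"
   and hyp: "\<forall>U \<rho>. unitary_op d U \<longrightarrow> density_op d \<rho> \<longrightarrow>
               \<epsilon> \<le> Re (mtrace (D (unitary_chan_on_first a U (E \<rho>)))) \<and>
               (\<exists>c::complex. D (unitary_chan_on_first a U (E \<rho>))
                   = c \<cdot>\<^sub>m (entry_conj U * \<rho> * adj (entry_conj U)))"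
  shows "\<exists>P. psd (d*d) P \<and> (\<forall>z. (\<forall>k. z k * cnj (z k) = 1) \<longrightarrow>
     (\<exists>c. \<epsilon> \<le> Re c \<and> (\<forall>x<d. \<forall>y<d. Bf (d*d) P (xv d x z) (xv d y z) = c * cnj (z x) * z y / of_nat d)))"
proof -
  define n where "n = d*a"
  define \<rho> where "\<rho> = (mat d d (\<lambda>_. 1 / of_nat d) :: complex mat)"
  have d0: "d > 0" using d3 by simp
  have dens: "density_op d \<rho>" unfolding \<rho>_def by (rule rho_density[OF d0])
  have \<rho>c: "\<rho> \<in> carrier_mat d d" unfolding \<rho>_def by simp
  define Z where "Z = E \<rho>"
  have Zpsd: "psd n Z" unfolding Z_def n_def using cp_psd[OF cpE] dens unfolding density_op_def by auto
  have Zc: "Z \<in> carrier_mat n n" using Zpsd unfolding psd_def by auto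
  define Zkl where "Zkl k l = mat n n (\<lambda>(r,s). if r div a = k \<and> s div a = l then Z$$(r,s) else 0)" for k l
  define M where "M = (mat (d*n) n (\<lambda>(R,r). if r = R mod n \<and> r div a = R div n then 1 else 0) :: complex mat)"
  define Y where "Y = M * Z * adj M"
  have Mc: "M \<in> carrier_mat (d*n) n" unfolding M_def by auto
  have Ypsd: "psd (d*n) Y" unfolding Y_def by (rule psd_congr[OF Zpsd Mc])
  have MZ: "(M*Z)$$(R,s) = (if (R mod n) div a = R div n then 1 else 0) * Z$$(R mod n, s)"
    if RS: "R < d*n" "s < n" for R s
  proof -
    have n0: "n > 0" using RS(1) by (cases "n = 0") auto
    have "(M*Z)$$(R,s) = (\<Sum>r\<in>{0..<n}. M$$(R,r) * Z$$(r,s))"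
      using RS Mc Zc by (auto simp: scalar_prod_def intro!: sum.cong)
    also have "\<dots> = (\<Sum>r\<in>{0..<n}. (if R mod n = r then (if (R mod n) div a = R div n then 1 else 0) else 0) * Z$$(r,s))"
    proof (rule sum.cong[OF refl])
      fix r assume "r \<in> {0..<n}"
      then have "M$$(R,r) = (if R mod n = r then (if (R mod n) div a = R div n then 1 else 0) else 0)"
        using RS unfolding M_def by auto
      then show "M$$(R,r) * Z$$(r,s) = (if R mod n = r then (if (R mod n) div a = R div n then 1 else 0) else 0) * Z$$(r,s)" by simp
    qed
    also have "\<dots> = (if (R mod n) div a = R div n then 1 else 0) * Z$$(R mod n, s)"
      by (rule sum_delta_l) (use n0 in simp)
    finally show ?thesis .
  qed
  have Yent: "Y$$(R,S) = (if (R mod n) div a = R div n then 1 else 0) * Z$$(R mod n, S mod n) * (if (S mod n) div a = S div n then 1 else 0)"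
    if RS: "R < d*n" "S < d*n" for R S
  proof -
    have n0: "n > 0" using RS(1) by (cases "n = 0") auto
    have MZc: "M * Z \<in> carrier_mat (d*n) n" using Mc Zc by auto
    have aMc: "adj M \<in> carrier_mat n (d*n)" using adj_carrier[OF Mc] .
    have "Y$$(R,S) = row (M*Z) R \<bullet> col (adj M) S" unfolding Y_def
      using RS MZc aMc by (subst index_mult_mat(1)) auto
    also have "\<dots> = (\<Sum>s\<in>{0..<n}. (M*Z)$$(R,s) * adj M $$ (s,S))"
      unfolding scalar_prod_def using RS MZc aMc by (intro sum.cong) (auto simp: carrier_matD[OF Mc] carrier_matD[OF Zc])
    finally have "Y$$(R,S) = (\<Sum>s\<in>{0..<n}. (M*Z)$$(R,s) * adj M $$ (s,S))" .
    also have "\<dots> = (\<Sum>s\<in>{0..<n}. (M*Z)$$(R,s) * (if s = S mod n then (if (S mod n) div a = S div n then 1 else 0) else 0))"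
    proof (rule sum.cong[OF refl])
      fix r assume "r \<in> {0..<n}"
      then have "adj M$$(r,S) = cnj (M$$(S,r))" using RS Mc by (intro adj_index) auto
      also have "\<dots> = (if r = S mod n then (if (S mod n) div a = S div n then 1 else 0) else 0)"
        using RS \<open>r \<in> {0..<n}\<close> unfolding M_def by simp
      finally have "adj M$$(r,S) = (if r = S mod n then (if (S mod n) div a = S div n then 1 else 0) else 0)" .
      then show "(M*Z)$$(R,r) * adj M$$(r,S) = (M*Z)$$(R,r) * (if r = S mod n then (if (S mod n) div a = S div n then 1 else 0) else 0)" by simp
    qed
    also have "\<dots> = (M*Z)$$(R,S mod n) * (if (S mod n) div a = S div n then 1 else 0)"
      by (rule sum_delta_r) (use n0 in simp)
    finally show ?thesis using MZ RS n0 by simp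
  qed
  have blk: "mat n n (\<lambda>(i,j). Y$$(k*n+i, l*n+j)) = Zkl k l" if kl: "k < d" "l < d" for k l
  proof (rule eq_matI)
    fix i j assume "i < dim_row (Zkl k l)" "j < dim_col (Zkl k l)"
    then have ij: "i < n" "j < n" unfolding Zkl_def by auto
    have b: "k*n+i < d*n" "l*n+j < d*n" using lt_block kl ij by auto
    have m: "(k*n+i) mod n = i" "(k*n+i) div n = k" "(l*n+j) mod n = j" "(l*n+j) div n = l"
      using ij by auto
    show "mat n n (\<lambda>(i,j). Y$$(k*n+i, l*n+j)) $$ (i,j) = Zkl k l $$ (i,j)"
      using Yent[OF b] ij m unfolding Zkl_def by simp
  qed (auto simp: Zkl_def)
  define P where "P = ampl d n d D Y"
  have Ppsd: "psd (d*d) P"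
  proof -
    have "\<forall>k X. psd (k*(d*a)) X \<longrightarrow> psd (k*d) (ampl k (d*a) d D X)"
      using cpD unfolding cp_tni_def completely_positive_def by auto
    then show ?thesis using Ypsd unfolding P_def n_def by auto
  qed
  have Pent: "P$$(r,s) = D (Zkl (r div d) (s div d)) $$ (r mod d, s mod d)" if rs: "r < d*d" "s < d*d" for r s
    using rs blk[OF div_lt[OF rs(1)] div_lt[OF rs(2)]] unfolding P_def ampl_def by simp
  have Dlin: "lin_map n d D" using cpD unfolding cp_tni_def n_def by auto
  show ?thesis
  proof (rule exI[of _ P], intro conjI allI impI)
    show "psd (d*d) P" by (rule Ppsd)
  next
    fix z :: "nat \<Rightarrow> complex" assume u: "\<forall>k. z k * cnj (z k) = 1"
    define U where "U = DiagM d z"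
    have unit: "unitary_op d U" using DiagM_unitary[OF u] by (simp add: U_def)
    define \<Phi> where "\<Phi> = D (unitary_chan_on_first a U Z)"
    obtain c where epsle: "\<epsilon> \<le> Re (mtrace \<Phi>)" and c\<Phi>: "\<Phi> = c \<cdot>\<^sub>m (entry_conj U * \<rho> * adj (entry_conj U))"
      using hyp unit dens unfolding \<Phi>_def Z_def by blast
    have chan: "unitary_chan_on_first a U Z = mat n n (\<lambda>rs. \<Sum>p\<in>{..<d}\<times>{..<d}. (z (fst p) * cnj (z (snd p))) * Zkl (fst p) (snd p) $$ rs)"
    proof -
      have "unitary_chan_on_first a U Z = mat n n (\<lambda>(r,s). z (r div a) * Z$$(r,s) * cnj (z (s div a)))"
        unfolding unitary_chan_on_first_def U_def kron_DiagM using DiagM_conj[OF Zc] n_def by simp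
      also have "\<dots> = mat n n (\<lambda>rs. \<Sum>p\<in>{..<d}\<times>{..<d}. (z (fst p) * cnj (z (snd p))) * Zkl (fst p) (snd p) $$ rs)"
      proof (rule eq_matI)
        fix r s assume "r < dim_row (mat n n (\<lambda>rs. \<Sum>p\<in>{..<d}\<times>{..<d}. (z (fst p) * cnj (z (snd p))) * Zkl (fst p) (snd p) $$ rs))"
          "s < dim_col (mat n n (\<lambda>rs. \<Sum>p\<in>{..<d}\<times>{..<d}. (z (fst p) * cnj (z (snd p))) * Zkl (fst p) (snd p) $$ rs))"
        then have rs: "r < n" "s < n" by auto
        have mem: "(r div a, s div a) \<in> {..<d}\<times>{..<d}" using rs div_lt unfolding n_def by auto
        have "(\<Sum>p\<in>{..<d}\<times>{..<d}. (z (fst p) * cnj (z (snd p))) * Zkl (fst p) (snd p) $$ (r,s))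
           = (\<Sum>p\<in>{..<d}\<times>{..<d}. if p = (r div a, s div a) then z (fst p) * cnj (z (snd p)) * Z$$(r,s) else 0)"
          using rs unfolding Zkl_def by (intro sum.cong) auto
        also have "\<dots> = z (r div a) * cnj (z (s div a)) * Z$$(r,s)" using mem by (simp add: sum.delta')
        finally show "mat n n (\<lambda>(r,s). z (r div a) * Z$$(r,s) * cnj (z (s div a))) $$ (r,s) =
            mat n n (\<lambda>rs. \<Sum>p\<in>{..<d}\<times>{..<d}. (z (fst p) * cnj (z (snd p))) * Zkl (fst p) (snd p) $$ rs) $$ (r,s)"
          using rs by (simp add: mult_ac)
      qed auto
      finally show ?thesis .
    qed
    have \<Phi>ent: "\<Phi>$$(x,y) = (\<Sum>p\<in>{..<d}\<times>{..<d}. (z (fst p) * cnj (z (snd p))) * D (Zkl (fst p) (snd p)) $$ (x,y))"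
      if xy: "x < d" "y < d" for x y
      unfolding \<Phi>_def chan by (rule lin_sum[OF Dlin _ _ xy]) (auto simp: Zkl_def)
    have ec: "entry_conj U * \<rho> * adj (entry_conj U) = mat d d (\<lambda>(i,j). cnj (z i) * \<rho>$$(i,j) * cnj (cnj (z j)))"
      unfolding U_def entry_conj_DiagM by (rule DiagM_conj[OF \<rho>c])
    have \<Phi>ent2: "\<Phi>$$(x,y) = c * cnj (z x) * z y / of_nat d" if xy: "x < d" "y < d" for x y
      using xy unfolding c\<Phi> ec by (simp add: \<rho>_def)
    have dimP: "dim_row \<Phi> = d" unfolding c\<Phi> ec by simp
    have "mtrace \<Phi> = (\<Sum>x<d. c * (z x * cnj (z x)) / of_nat d)"
      unfolding mtrace_def dimP by (intro sum.cong) (auto simp: \<Phi>ent2 mult_ac)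
    also have "\<dots> = c" using u d0 by simp
    finally have trc: "mtrace \<Phi> = c" .
    show "\<exists>c. \<epsilon> \<le> Re c \<and> (\<forall>x<d. \<forall>y<d. Bf (d*d) P (xv d x z) (xv d y z) = c * cnj (z x) * z y / of_nat d)"
    proof -
    have B: "Bf (d*d) P (xv d x z) (xv d y z) = c * cnj (z x) * z y / of_nat d" if xy: "x < d" "y < d" for x y
    proof -
      have "Bf (d*d) P (xv d x z) (xv d y z)
          = (\<Sum>i<d*d. if i mod d = x then (\<Sum>j<d*d. if j mod d = y then z (i div d) * P$$(i,j) * cnj (z (j div d)) else 0) else 0)"
        unfolding Bf_def xv_def by (intro sum.cong) (auto intro!: sum.cong)
      also have "\<dots> = (\<Sum>k<d. \<Sum>l<d. z k * P$$(k*d+x, l*d+y) * cnj (z l))"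
        using xy d0 by (simp add: reindex_mod)
      also have "\<dots> = (\<Sum>k<d. \<Sum>l<d. z k * cnj (z l) * D (Zkl k l) $$ (x,y))"
      proof -
        have eqkl: "z k * P$$(k*d+x, l*d+y) * cnj (z l) = z k * cnj (z l) * D (Zkl k l) $$ (x,y)"
          if kl: "k < d" "l < d" for k l
        proof -
          have b: "k*d+x < d*d" "l*d+y < d*d" using lt_block kl xy by auto
          show ?thesis using Pent[OF b] xy by simp
        qed
        show ?thesis using eqkl by (intro sum.cong refl) auto
      qed
      also have "\<dots> = (\<Sum>p\<in>{..<d}\<times>{..<d}. (z (fst p) * cnj (z (snd p))) * D (Zkl (fst p) (snd p)) $$ (x,y))"
        by (simp add: sum.cartesian_product case_prod_beta)
      also have "\<dots> = c * cnj (z x) * z y / of_nat d" using \<Phi>ent[OF xy] \<Phi>ent2[OF xy] by simp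
      finally show "Bf (d*d) P (xv d x z) (xv d y z) = c * cnj (z x) * z y / of_nat d" .
    qed
    show ?thesis using B epsle trc by auto
    qed
  qed
qed


theorem theorem2:
  fixes d :: nat
  assumes "d \<ge> 3"
  shows "\<not> (\<exists>(\<epsilon>::real) (a::nat) E D.
            \<epsilon> > 0 \<and> cp_tni d (d * a) E \<and> cp_tni (d * a) d D \<and>
            (\<forall>U \<rho>. unitary_op d U \<longrightarrow> density_op d \<rho> \<longrightarrow>
               \<epsilon> \<le> Re (mtrace (D (unitary_chan_on_first a U (E \<rho>)))) \<and>
               (\<exists>c::complex. D (unitary_chan_on_first a U (E \<rho>))
                   = c \<cdot>\<^sub>m (entry_conj U * \<rho> * adj (entry_conj U)))))"
proof
  assume "\<exists>(\<epsilon>::real) (a::nat) E D.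
            \<epsilon> > 0 \<and> cp_tni d (d * a) E \<and> cp_tni (d * a) d D \<and>
            (\<forall>U \<rho>. unitary_op d U \<longrightarrow> density_op d \<rho> \<longrightarrow>
               \<epsilon> \<le> Re (mtrace (D (unitary_chan_on_first a U (E \<rho>)))) \<and>
               (\<exists>c::complex. D (unitary_chan_on_first a U (E \<rho>))
                   = c \<cdot>\<^sub>m (entry_conj U * \<rho> * adj (entry_conj U))))"
  then obtain \<epsilon> :: real and a :: nat and E D where
    eps: "\<epsilon> > 0" and cpE: "cp_tni d (d * a) E" and cpD: "cp_tni (d * a) d D" and
    hyp: "\<forall>U \<rho>. unitary_op d U \<longrightarrow> density_op d \<rho> \<longrightarrow>
               \<epsilon> \<le> Re (mtrace (D (unitary_chan_on_first a U (E \<rho>)))) \<and>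
               (\<exists>c::complex. D (unitary_chan_on_first a U (E \<rho>))
                   = c \<cdot>\<^sub>m (entry_conj U * \<rho> * adj (entry_conj U)))"
    by blast
  obtain P where P: "psd (d*d) P" and key: "\<forall>z. (\<forall>k. z k * cnj (z k) = 1) \<longrightarrow>
     (\<exists>c. \<epsilon> \<le> Re c \<and> (\<forall>x<d. \<forall>y<d. Bf (d*d) P (xv d x z) (xv d y z) = c * cnj (z x) * z y / of_nat d))"
    using construct[OF assms cpE cpD hyp] by blast
  show False by (rule final_contra[OF P assms eps]) (use key in blast)
qed

end
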